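(* Let $n,s,t\in\mathbb{N}$ with $1\le s\le t\le n$, and assume $t\ge 2s$ and $s\ge n-t$. Then the number $\mathcal{M}(n,s,t)$ of monochromatic Schur triples on $\{1,\dots,n\}$ under the coloring $R^sB^{t-s}R^{n-t}$ is \[ \mathcal{M}(n,s,t)=\frac{s(s-1)}{2}+\frac{(t-2s)(t-2s-1)}{2}+(n-t)(n-t-1). \]
   Context: A Schur triple on $[n]=\{1,\dots,n\}$ is an ordered triple $(x,y,z)\in[n]^3$ with $z=x+y$ (so $(x,y,x+y)$ and $(y,x,x+y)$ are distinct if $x\ne y$); it is monochromatic under a coloring $\chi$ of $[n]$ if $\chi(x)=\chi(y)=\chi(z)$. The coloring $R^sB^{t-s}R^{n-t}$ colors $1,\dots,s$ red, $s+1,\dots,t$ blue, and $t+1,\dots,n$ red. *)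

theory Defs
  imports Complex_Main
begin

datatype colour = Red | Blue

definition schur_triples :: "nat \<Rightarrow> (nat \<times> nat \<times> nat) set" where
  "schur_triples n = {(x, y, z). x \<in> {1..n} \<and> y \<in> {1..n} \<and> z \<in> {1..n} \<and> z = x + y}"

definition monochromatic :: "(nat \<Rightarrow> colour) \<Rightarrow> nat \<times> nat \<times> nat \<Rightarrow> bool" where
  "monochromatic \<chi> tr = (case tr of (x, y, z) \<Rightarrow> \<chi> x = \<chi> y \<and> \<chi> y = \<chi> z)"

definition RBR_colouring :: "nat \<Rightarrow> nat \<Rightarrow> nat \<Rightarrow> colour" where
  "RBR_colouring s t i = (if i \<le> s then Red else if i \<le> t then Blue else Red)"

definition mono_count :: "(nat \<Rightarrow> colour) \<Rightarrow> nat \<Rightarrow> nat" where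
  "mono_count \<chi> n = card {tr \<in> schur_triples n. monochromatic \<chi> tr}"

definition M :: "nat \<Rightarrow> nat \<Rightarrow> nat \<Rightarrow> nat" where
  "M n s t = mono_count (RBR_colouring s t) n"

end

theory Submission
  imports Defs
begin

lemma T_card: "2 * card {(x::nat,y::nat). 1\<le>x \<and> 1\<le>y \<and> x+y\<le>m} = m*(m-1)"
proof (induction m)
  case 0
  have "{(x::nat,y::nat). 1\<le>x \<and> 1\<le>y \<and> x+y\<le>0} = {}" by auto
  then show ?case by (simp only:) simp
next
  case (Suc m)
  have eq: "{(x::nat,y::nat). 1\<le>x \<and> 1\<le>y \<and> x+y\<le>Suc m} =
     {(x::nat,y::nat). 1\<le>x \<and> 1\<le>y \<and> x+y\<le>m} \<union> (\<lambda>x. (x, Suc m - x)) ` {1..m}"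
    by (auto simp: image_iff)
  have fin: "finite {(x::nat,y::nat). 1\<le>x \<and> 1\<le>y \<and> x+y\<le>m}"
    by (rule finite_subset[of _ "{..m} \<times> {..m}"]) auto
  have dis: "{(x::nat,y::nat). 1\<le>x \<and> 1\<le>y \<and> x+y\<le>m} \<inter> (\<lambda>x. (x, Suc m - x)) ` {1..m} = {}"
    by auto
  have inj: "inj_on (\<lambda>x. (x, Suc m - x)) {1..m}" by (auto simp: inj_on_def)
  have "card {(x::nat,y::nat). 1\<le>x \<and> 1\<le>y \<and> x+y\<le>Suc m} =
        card {(x::nat,y::nat). 1\<le>x \<and> 1\<le>y \<and> x+y\<le>m} + m"
    unfolding eq using card_Un_disjoint[OF fin _ dis] card_image[OF inj] by simp
  then show ?case using Suc by (cases m) auto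
qed

lemma gen_card:
  "2 * card {(x::nat,y::nat,z::nat). z = x+y \<and> a<x \<and> b<y \<and> x+y\<le>c} = (c-a-b)*(c-a-b-1)"
proof -
  let ?T = "{(x::nat,y::nat). 1\<le>x \<and> 1\<le>y \<and> x+y\<le>c-a-b}"
  let ?f = "\<lambda>(x,y). (x+a, y+b, x+y+a+b)"
  have "{(x::nat,y::nat,z::nat). z = x+y \<and> a<x \<and> b<y \<and> x+y\<le>c} = ?f ` ?T"
  proof (rule set_eqI, rule iffI)
    fix p assume "p \<in> {(x::nat,y::nat,z::nat). z = x+y \<and> a<x \<and> b<y \<and> x+y\<le>c}"
    then obtain x y z where p: "p = (x,y,z)" "z = x+y" "a<x" "b<y" "x+y\<le>c" by auto
    show "p \<in> ?f ` ?T"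
      by (rule image_eqI[where x="(x-a,y-b)"]) (use p in auto)
  next
    fix p assume "p \<in> ?f ` ?T"
    then obtain u v where "p = ?f (u,v)" "(u,v) \<in> ?T" by blast
    then show "p \<in> {(x::nat,y::nat,z::nat). z = x+y \<and> a<x \<and> b<y \<and> x+y\<le>c}" by auto
  qed
  moreover have "inj_on ?f ?T" by (auto simp: inj_on_def)
  ultimately have "card {(x::nat,y::nat,z::nat). z = x+y \<and> a<x \<and> b<y \<and> x+y\<le>c} = card ?T"
    by (simp add: card_image)
  then show ?thesis using T_card[of "c-a-b"] by simp
qed

theorem lemma2p1:
  fixes n s t :: nat
  assumes "1 \<le> s" "s \<le> t" "t \<le> n" "t \<ge> 2 * s" "s \<ge> n - t"
  shows "real (M n s t) = real (s * (s - 1)) / 2 + real ((t - 2 * s) * (t - 2 * s - 1)) / 2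
           + real ((n - t) * (n - t - 1))"
proof -
  define A where "A = {(x::nat,y::nat,z::nat). z = x+y \<and> 0<x \<and> 0<y \<and> x+y\<le>s}"
  define B where "B = {(x::nat,y::nat,z::nat). z = x+y \<and> s<x \<and> s<y \<and> x+y\<le>t}"
  define C where "C = {(x::nat,y::nat,z::nat). z = x+y \<and> 0<x \<and> t<y \<and> x+y\<le>n}"
  define D where "D = {(x::nat,y::nat,z::nat). z = x+y \<and> t<x \<and> 0<y \<and> x+y\<le>n}"
  have cA: "2 * card A = s*(s-1)" using gen_card[of 0 0 s] unfolding A_def by simp
  have cB: "2 * card B = (t-2*s)*(t-2*s-1)" using gen_card[of s s t] unfolding B_def
    by (simp add: mult_2)
  have cC: "2 * card C = (n-t)*(n-t-1)" using gen_card[of 0 t n] unfolding C_def by simp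
  have cD: "2 * card D = (n-t)*(n-t-1)" using gen_card[of t 0 n] unfolding D_def by simp
  have fin: "finite {(x::nat,y::nat,z::nat). z = x+y \<and> a<x \<and> b<y \<and> x+y\<le>c}" for a b c
    by (rule finite_subset[of _ "{..c} \<times> {..c} \<times> {..c}"]) auto
  have fA: "finite A" and fB: "finite B" and fC: "finite C" and fD: "finite D"
    unfolding A_def B_def C_def D_def using fin by auto
  have seteq: "{tr \<in> schur_triples n. monochromatic (RBR_colouring s t) tr} = A \<union> B \<union> C \<union> D"
  proof (rule set_eqI, rule iffI)
    fix p assume "p \<in> {tr \<in> schur_triples n. monochromatic (RBR_colouring s t) tr}"
    then obtain x y z where p: "p = (x,y,z)" "z = x+y" "1\<le>x" "1\<le>y" "z\<le>n"
      and m: "RBR_colouring s t x = RBR_colouring s t y" "RBR_colouring s t y = RBR_colouring s t z"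
      unfolding schur_triples_def monochromatic_def by auto
    have "(x+y\<le>s) \<or> (s<x \<and> s<y \<and> x+y\<le>t) \<or> (t<y \<and> x+y\<le>n) \<or> (t<x \<and> x+y\<le>n)"
    proof (cases "x \<le> s")
      case True
      then have "RBR_colouring s t x = Red" by (simp add: RBR_colouring_def)
      then show ?thesis using m p assms True by (simp add: RBR_colouring_def split: if_splits)
    next
      case F: False
      show ?thesis
      proof (cases "x \<le> t")
        case True
        then have "RBR_colouring s t x = Blue" using F by (simp add: RBR_colouring_def)
        then show ?thesis using m p assms True F by (simp add: RBR_colouring_def split: if_splits)
      next
        case False
        then show ?thesis using p by simp
      qed
    qed
    then show "p \<in> A \<union> B \<union> C \<union> D" unfolding A_def B_def C_def D_def using p by auto
  next
    fix p assume "p \<in> A \<union> B \<union> C \<union> D"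
    then obtain x y z where p: "p = (x,y,z)" "z = x+y" "1\<le>x" "1\<le>y" "z\<le>n"
      and c: "(x+y\<le>s) \<or> (s<x \<and> s<y \<and> x+y\<le>t) \<or> (t<y \<and> x+y\<le>n) \<or> (t<x \<and> x+y\<le>n)"
      unfolding A_def B_def C_def D_def using assms by auto
    have "RBR_colouring s t x = RBR_colouring s t y \<and> RBR_colouring s t y = RBR_colouring s t z"
      using c
    proof (elim disjE)
      assume h: "x+y\<le>s"
      then have "x \<le> s" "y \<le> s" "z \<le> s" using p by auto
      then show ?thesis unfolding RBR_colouring_def by simp
    next
      assume h: "s<x \<and> s<y \<and> x+y\<le>t"
      then have "s < x" "x \<le> t" "s < y" "y \<le> t" "s < z" "z \<le> t" using p by auto
      then show ?thesis unfolding RBR_colouring_def by simp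
    next
      assume h: "t<y \<and> x+y\<le>n"
      then have "x \<le> s" "t < y" "t < z" using p assms by auto
      then show ?thesis unfolding RBR_colouring_def by simp
    next
      assume h: "t<x \<and> x+y\<le>n"
      then have "y \<le> s" "t < x" "t < z" using p assms by auto
      then show ?thesis unfolding RBR_colouring_def by simp
    qed
    then have "monochromatic (RBR_colouring s t) (x,y,z)"
      unfolding monochromatic_def by simp
    then show "p \<in> {tr \<in> schur_triples n. monochromatic (RBR_colouring s t) tr}"
      using p unfolding schur_triples_def by auto
  qed
  have d1: "A \<inter> B = {}" unfolding A_def B_def by auto
  have d2: "(A \<union> B) \<inter> C = {}" unfolding A_def B_def C_def using assms by auto
  have d3: "(A \<union> B \<union> C) \<inter> D = {}" unfolding A_def B_def C_def D_def using assms by auto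
  have "card (A \<union> B \<union> C \<union> D) = card A + card B + card C + card D"
    using card_Un_disjoint[OF _ _ d1] card_Un_disjoint[OF _ _ d2] card_Un_disjoint[OF _ _ d3]
      fA fB fC fD by simp
  then have "2 * M n s t = s*(s-1) + (t-2*s)*(t-2*s-1) + 2*((n-t)*(n-t-1))"
    unfolding M_def mono_count_def seteq using cA cB cC cD by simp
  then show ?thesis
  proof -
    assume h: "2 * M n s t = s*(s-1) + (t-2*s)*(t-2*s-1) + 2*((n-t)*(n-t-1))"
    define a where "a = s*(s-1)"
    define b where "b = (t-2*s)*(t-2*s-1)"
    define w where "w = (n-t)*(n-t-1)"
    have "2 * M n s t = a + b + 2 * w" using h unfolding a_def b_def w_def .
    then have "real (2 * M n s t) = real (a + b + 2 * w)" by (rule arg_cong)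
    then have "real (M n s t) = real a / 2 + real b / 2 + real w" by simp
    then show ?thesis unfolding a_def b_def w_def .
  qed
qed

end
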